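(* Any robust protocol over an erasure channel has a fixed order of speaking.
   Context: An erasure channel over alphabet $\Sigma$ is a channel $\Sigma\to\Sigma\cup\{\bot\}$ in which the adversary may only replace a transmitted symbol by the erasure mark $\bot$; there is no feedback. In each round exactly one party (Alice, holding input $x$, or Bob, holding input $y$) sends one symbol. A protocol is robust if (1) for all inputs it runs for a fixed number $N$ of rounds and (2) at every round, for all inputs and every possible erasure pattern, the parties agree on who speaks next. It has a fixed order of speaking if there is a function $g:\mathbb{N}\to\{\text{Alice},\text{Bob}\}$ such that the speaker at round $i$ is $g(i)$, independent of the inputs and of the erasure pattern. *)

theory Defs
  imports Main
begin

datatype party = Alice | Bob

text \<open>One entry of a party's local view of a round: either it sent a symbol,
  or it listened and received a symbol or the erasure mark (None = bottom).\<close>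
datatype 'a event = Sent 'a | Recv "'a option"

text \<open>Each party decides, from its input and its local view (whose length is the round
  index), who it believes speaks next and, if it speaks, what symbol it sends.\<close>
record ('x, 'y, 'a) protocol =
  nextA :: "'x \<Rightarrow> 'a event list \<Rightarrow> party"
  nextB :: "'y \<Rightarrow> 'a event list \<Rightarrow> party"
  msgA  :: "'x \<Rightarrow> 'a event list \<Rightarrow> 'a"
  msgB  :: "'y \<Rightarrow> 'a event list \<Rightarrow> 'a"
  rounds :: nat

text \<open>The sender of a round is taken from Alice's belief; robustness below requires
  Bob to agree at every round.\<close>
fun run :: "('x, 'y, 'a, 'z) protocol_scheme \<Rightarrow> 'x \<Rightarrow> 'y \<Rightarrow> (nat \<Rightarrow> bool) \<Rightarrow> nat
            \<Rightarrow> 'a event list \<times> 'a event list" where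
  "run P x y e 0 = ([], [])"
| "run P x y e (Suc n) =
     (let (va, vb) = run P x y e n in
      if nextA P x va = Alice then
        (let s = msgA P x va in (va @ [Sent s], vb @ [Recv (if e n then None else Some s)]))
      else
        (let s = msgB P y vb in (va @ [Recv (if e n then None else Some s)], vb @ [Sent s])))"

definition speaker :: "('x, 'y, 'a, 'z) protocol_scheme \<Rightarrow> 'x \<Rightarrow> 'y \<Rightarrow> (nat \<Rightarrow> bool) \<Rightarrow> nat \<Rightarrow> party" where
  "speaker P x y e n = nextA P x (fst (run P x y e n))"

definition robust :: "('x, 'y, 'a, 'z) protocol_scheme \<Rightarrow> bool" where
  "robust P \<longleftrightarrow> (\<forall>x y e n. n < rounds P \<longrightarrow>
      nextA P x (fst (run P x y e n)) = nextB P y (snd (run P x y e n)))"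

definition fixed_order :: "('x, 'y, 'a, 'z) protocol_scheme \<Rightarrow> bool" where
  "fixed_order P \<longleftrightarrow> (\<exists>g :: nat \<Rightarrow> party. \<forall>x y e n. n < rounds P \<longrightarrow> speaker P x y e n = g n)"

end

theory Submission
  imports Defs
begin

lemma fst_run_Suc:
  "fst (run P x y e (Suc n)) =
    (if nextA P x (fst (run P x y e n)) = Alice
     then fst (run P x y e n) @ [Sent (msgA P x (fst (run P x y e n)))]
     else fst (run P x y e n) @ [Recv (if e n then None else Some (msgB P y (snd (run P x y e n))))])"
  by (simp add: Let_def case_prod_unfold)

lemma snd_run_Suc:
  "snd (run P x y e (Suc n)) =
    (if nextA P x (fst (run P x y e n)) = Alice
     then snd (run P x y e n) @ [Recv (if e n then None else Some (msgA P x (fst (run P x y e n))))]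
     else snd (run P x y e n) @ [Sent (msgB P y (snd (run P x y e n)))])"
  by (simp add: Let_def case_prod_unfold)

lemma run_agree:
  "(\<forall>i<n. e i = e' i) \<Longrightarrow> run P x y e n = run P x y e' n"
  by (induction n) (auto simp: Let_def case_prod_unfold)

lemma LA:
  assumes "k \<le> n"
    and "fst (run P x y1 e1 k) = fst (run P x y2 e2 k)"
    and "\<forall>m. k \<le> m \<longrightarrow> m < n \<longrightarrow> speaker P x y1 e1 m = speaker P x y2 e2 m \<and>
          (speaker P x y1 e1 m = Bob \<longrightarrow> e1 m \<and> e2 m)"
  shows "fst (run P x y1 e1 n) = fst (run P x y2 e2 n)"
  using assms
proof (induction n)
  case 0 then show ?case by simp
next
  case (Suc n)
  show ?case
  proof (cases "k = Suc n")
    case True then show ?thesis using Suc by simp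
  next
    case False
    then have k: "k \<le> n" using Suc by simp
    have IH: "fst (run P x y1 e1 n) = fst (run P x y2 e2 n)" using Suc k by simp
    have c: "speaker P x y1 e1 n = speaker P x y2 e2 n \<and>
          (speaker P x y1 e1 n = Bob \<longrightarrow> e1 n \<and> e2 n)" using Suc k by simp
    show ?thesis
    proof (cases "speaker P x y1 e1 n")
      case Alice
      then show ?thesis using IH c unfolding fst_run_Suc by (simp add: speaker_def)
    next
      case Bob
      then show ?thesis using IH c unfolding fst_run_Suc by (simp add: speaker_def)
    qed
  qed
qed

lemma LB:
  assumes "k \<le> n"
    and "snd (run P x1 y e1 k) = snd (run P x2 y e2 k)"
    and "\<forall>m. k \<le> m \<longrightarrow> m < n \<longrightarrow> speaker P x1 y e1 m = speaker P x2 y e2 m \<and>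
          (speaker P x1 y e1 m = Alice \<longrightarrow> e1 m \<and> e2 m)"
  shows "snd (run P x1 y e1 n) = snd (run P x2 y e2 n)"
  using assms
proof (induction n)
  case 0 then show ?case by simp
next
  case (Suc n)
  show ?case
  proof (cases "k = Suc n")
    case True then show ?thesis using Suc by simp
  next
    case False
    then have k: "k \<le> n" using Suc by simp
    have IH: "snd (run P x1 y e1 n) = snd (run P x2 y e2 n)" using Suc k by simp
    have c: "speaker P x1 y e1 n = speaker P x2 y e2 n \<and>
          (speaker P x1 y e1 n = Alice \<longrightarrow> e1 n \<and> e2 n)" using Suc k by simp
    show ?thesis
    proof (cases "speaker P x1 y e1 n")
      case Alice
      then show ?thesis using IH c unfolding snd_run_Suc by (simp add: speaker_def)
    next
      case Bob
      then show ?thesis using IH c unfolding snd_run_Suc by (simp add: speaker_def)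
    qed
  qed
qed

lemma key:
  assumes rob: "robust P" and n: "n < rounds P" and jn: "j < n"
    and agree: "\<forall>i<j. e i = e' i"
    and er: "\<forall>i. j < i \<longrightarrow> i < n \<longrightarrow> e i \<and> e' i"
    and IH: "\<forall>m<n. speaker P x y e m = speaker P x y e' m"
  shows "speaker P x y e n = speaker P x y e' n"
proof -
  have r: "run P x y e j = run P x y e' j" by (rule run_agree[OF agree])
  show ?thesis
  proof (cases "speaker P x y e j")
    case Alice
    have "fst (run P x y e n) = fst (run P x y e' n)"
    proof (rule LA[where k=j])
      show "j \<le> n" using jn by simp
      show "fst (run P x y e j) = fst (run P x y e' j)" using r by simp
      show "\<forall>m. j \<le> m \<longrightarrow> m < n \<longrightarrow> speaker P x y e m = speaker P x y e' m \<and>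
          (speaker P x y e m = Bob \<longrightarrow> e m \<and> e' m)"
      proof (intro allI impI conjI)
        fix m assume m: "j \<le> m" "m < n"
        show "speaker P x y e m = speaker P x y e' m" using IH m by blast
        assume s: "speaker P x y e m = Bob"
        have "m \<noteq> j" using s Alice by auto
        then have "j < m" using m by simp
        then show "e m" "e' m" using er m by auto
      qed
    qed
    then show ?thesis by (simp add: speaker_def)
  next
    case Bob
    have "snd (run P x y e n) = snd (run P x y e' n)"
    proof (rule LB[where k=j])
      show "j \<le> n" using jn by simp
      show "snd (run P x y e j) = snd (run P x y e' j)" using r by simp
      show "\<forall>m. j \<le> m \<longrightarrow> m < n \<longrightarrow> speaker P x y e m = speaker P x y e' m \<and>
          (speaker P x y e m = Alice \<longrightarrow> e m \<and> e' m)"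
      proof (intro allI impI conjI)
        fix m assume m: "j \<le> m" "m < n"
        show "speaker P x y e m = speaker P x y e' m" using IH m by blast
        assume s: "speaker P x y e m = Alice"
        have "m \<noteq> j" using s Bob by auto
        then have "j < m" using m by simp
        then show "e m" "e' m" using er m by auto
      qed
    qed
    moreover have "nextA P x (fst (run P x y e n)) = nextB P y (snd (run P x y e n))"
      using rob n unfolding robust_def by blast
    moreover have "nextA P x (fst (run P x y e' n)) = nextB P y (snd (run P x y e' n))"
      using rob n unfolding robust_def by blast
    ultimately show ?thesis unfolding speaker_def by simp
  qed
qed

lemma erase_indep:
  assumes rob: "robust P" and n: "n < rounds P"
    and IH: "\<forall>m<n. \<forall>e e'. speaker P x y e m = speaker P x y e' m"
  shows "speaker P x y e n = speaker P x y (\<lambda>_. True) n"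
proof -
  define ek where "ek k = (\<lambda>i. if i < k then e i else True)" for k
  have "k \<le> n \<Longrightarrow> speaker P x y (ek k) n = speaker P x y (\<lambda>_. True) n" for k
  proof (induction k)
    case 0 then show ?case by (simp add: ek_def)
  next
    case (Suc k)
    have "speaker P x y (ek (Suc k)) n = speaker P x y (ek k) n"
    proof (rule key[OF rob n, where j=k])
      show "k < n" using Suc.prems by simp
      show "\<forall>i<k. ek (Suc k) i = ek k i" by (simp add: ek_def)
      show "\<forall>i. k < i \<longrightarrow> i < n \<longrightarrow> ek (Suc k) i \<and> ek k i" by (simp add: ek_def)
      show "\<forall>m<n. speaker P x y (ek (Suc k)) m = speaker P x y (ek k) m" using IH by blast
    qed
    moreover have "speaker P x y (ek k) n = speaker P x y (\<lambda>_. True) n"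
      using Suc.IH Suc.prems by (metis Suc_leD)
    ultimately show ?case by (rule trans)
  qed
  then have 1: "speaker P x y (ek n) n = speaker P x y (\<lambda>_. True) n" by blast
  have "run P x y (ek n) n = run P x y e n"
    by (rule run_agree) (simp add: ek_def)
  then have "speaker P x y (ek n) n = speaker P x y e n" unfolding speaker_def by metis
  then show ?thesis using 1 by metis
qed

theorem mainTheorem9:
  fixes P :: "('x, 'y, 'a) protocol"
  assumes "robust P"
  shows "fixed_order P"
proof -
  define F where "F = (\<lambda>_::nat. True)"
  define x0 :: 'x where "x0 = undefined"
  define y0 :: 'y where "y0 = undefined"
  define g where "g m = speaker P x0 y0 F m" for m
  have main: "\<forall>x y e. speaker P x y e n = g n" if "n < rounds P" for n
    using that
  proof (induction n rule: less_induct)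
    case (less n)
    have IH: "\<forall>m<n. \<forall>x y e. speaker P x y e m = g m" using less by auto
    show ?case
    proof (intro allI)
      fix x y e
      have s1: "speaker P x y e n = speaker P x y F n"
        using erase_indep[OF assms less.prems] IH unfolding F_def by metis
      have a: "fst (run P x y F n) = fst (run P x y0 F n)"
        by (rule LA[where k=0]) (use IH in \<open>auto simp: F_def\<close>)
      have b: "snd (run P x y0 F n) = snd (run P x0 y0 F n)"
        by (rule LB[where k=0]) (use IH in \<open>auto simp: F_def\<close>)
      have "speaker P x y F n = nextA P x (fst (run P x y0 F n))"
        using a by (simp add: speaker_def)
      also have "\<dots> = nextB P y0 (snd (run P x y0 F n))"
        using assms less.prems unfolding robust_def by blast
      also have "\<dots> = nextB P y0 (snd (run P x0 y0 F n))" using b by simp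
      also have "\<dots> = g n"
        using assms less.prems unfolding robust_def g_def speaker_def by metis
      finally show "speaker P x y e n = g n" using s1 by simp
    qed
  qed
  show ?thesis unfolding fixed_order_def using main by blast
qed

end
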